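(* Let $A=A_s+A_d\epsilon\in\mathbb{D}^{m\times n}$. Then the DMPGI of the essential part $A_e$ exists and $$A^G=A_e^D.$$ In particular, if all nonzero singular values of $A$ are appreciable, then the DMPGI $A^D$ exists and $A^D=A^G$; otherwise $A^D$ does not exist and $A^G$ is the DMPGI of $A_e$.
   Context: A dual real number is $a=a_s+a_d\epsilon$ with $a_s,a_d\in\mathbb R$, $\epsilon\neq0$, $\epsilon^2=0$; appreciable if $a_s\neq0$, infinitesimal otherwise; ordered by $a>b$ iff $a_s>b_s$, or $a_s=b_s$ and $a_d>b_d$. A dual real matrix is $A=A_s+A_d\epsilon$ with real $A_s,A_d$; $A^\top=A_s^\top+A_d^\top\epsilon$; orthogonal means $U^\top U=UU^\top=I$. Every $A\in\mathbb{D}^{m\times n}$ has an SVD $A=U\Sigma V^\top$ with $U,V$ orthogonal dual real matrices and $\Sigma$ diagonal with entries $\mu_1\ge\dots\ge\mu_r$ positive appreciable, $\mu_{r+1}\ge\dots\ge\mu_t$ positive infinitesimal, and zeros (unique). The essential part is $A_e=U\begin{bmatrix}\mathrm{diag}(\mu_1,\dots,\mu_r)&O\\O&O\end{bmatrix}V^\top$. The GMPI $A^G$ is the unique $X$ with $AXA=A_e$, $XAX=X$, $(AX)^\top=AX$, $(XA)^\top=XA$. The DMPGI $A^D$ of a dual real matrix $B$ is a matrix $X$ satisfying $BXB=B$, $XBX=X$, $(BX)^\top=BX$, $(XB)^\top=XB$ (when it exists). *)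

theory Defs
  imports "Jordan_Normal_Form.Matrix"
begin

text \<open>Dual real numbers a = a_s + a_d eps are represented as pairs (a_s, a_d).
  Dual real m x n matrices A = A_s + A_d eps are represented as pairs (A_s, A_d)
  of real m x n matrices.\<close>

type_synonym dual = "real \<times> real"
type_synonym dmat = "real mat \<times> real mat"

definition dual_le :: "dual \<Rightarrow> dual \<Rightarrow> bool" where
  "dual_le a b \<longleftrightarrow> fst a < fst b \<or> (fst a = fst b \<and> snd a \<le> snd b)"

definition dcarrier :: "nat \<Rightarrow> nat \<Rightarrow> dmat set" where
  "dcarrier m n = {A. fst A \<in> carrier_mat m n \<and> snd A \<in> carrier_mat m n}"

definition dmult :: "dmat \<Rightarrow> dmat \<Rightarrow> dmat" where
  "dmult A B = (fst A * fst B, fst A * snd B + snd A * fst B)"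

definition dtrans :: "dmat \<Rightarrow> dmat" where
  "dtrans A = (transpose_mat (fst A), transpose_mat (snd A))"

definition dident :: "nat \<Rightarrow> dmat" where
  "dident k = (1\<^sub>m k, 0\<^sub>m k k)"

definition dentry :: "dmat \<Rightarrow> nat \<Rightarrow> nat \<Rightarrow> dual" where
  "dentry A i j = (fst A $$ (i, j), snd A $$ (i, j))"

definition dorthogonal :: "nat \<Rightarrow> dmat \<Rightarrow> bool" where
  "dorthogonal k U \<longleftrightarrow> U \<in> dcarrier k k \<and>
     dmult (dtrans U) U = dident k \<and> dmult U (dtrans U) = dident k"

text \<open>SVD A = U S V^T: S diagonal with entries non-increasing (dual order) and
  nonnegative, i.e. positive appreciable ones, then positive infinitesimal ones, then zeros.\<close>
definition dsvd :: "nat \<Rightarrow> nat \<Rightarrow> dmat \<Rightarrow> dmat \<Rightarrow> dmat \<Rightarrow> dmat \<Rightarrow> bool" where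
  "dsvd m n A U S V \<longleftrightarrow>
     A \<in> dcarrier m n \<and> dorthogonal m U \<and> dorthogonal n V \<and> S \<in> dcarrier m n \<and>
     (\<forall>i<m. \<forall>j<n. i \<noteq> j \<longrightarrow> dentry S i j = (0, 0)) \<and>
     (\<forall>i<min m n. dual_le (0, 0) (dentry S i i)) \<and>
     (\<forall>i j. i \<le> j \<and> j < min m n \<longrightarrow> dual_le (dentry S j j) (dentry S i i)) \<and>
     A = dmult (dmult U S) (dtrans V)"

definition app_part :: "nat \<Rightarrow> nat \<Rightarrow> dmat \<Rightarrow> dmat" where
  "app_part m n S = (mat m n (\<lambda>(i, j). fst S $$ (i, j)),
                     mat m n (\<lambda>(i, j). if fst S $$ (i, j) \<noteq> 0 then snd S $$ (i, j) else 0))"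

definition ess_part :: "nat \<Rightarrow> nat \<Rightarrow> dmat \<Rightarrow> dmat \<Rightarrow> dmat \<Rightarrow> dmat" where
  "ess_part m n U S V = dmult (dmult U (app_part m n S)) (dtrans V)"

definition is_DMPGI :: "nat \<Rightarrow> nat \<Rightarrow> dmat \<Rightarrow> dmat \<Rightarrow> bool" where
  "is_DMPGI m n B X \<longleftrightarrow> X \<in> dcarrier n m \<and>
     dmult (dmult B X) B = B \<and> dmult (dmult X B) X = X \<and>
     dtrans (dmult B X) = dmult B X \<and> dtrans (dmult X B) = dmult X B"

definition is_GMPI :: "nat \<Rightarrow> nat \<Rightarrow> dmat \<Rightarrow> dmat \<Rightarrow> dmat \<Rightarrow> bool" where
  "is_GMPI m n A Ae X \<longleftrightarrow> X \<in> dcarrier n m \<and>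
     dmult (dmult A X) A = Ae \<and> dmult (dmult X A) X = X \<and>
     dtrans (dmult A X) = dmult A X \<and> dtrans (dmult X A) = dmult X A"

end

theory Submission
  imports Defs
begin
lemma dcarrierI: "fst A \<in> carrier_mat m n \<Longrightarrow> snd A \<in> carrier_mat m n \<Longrightarrow> A \<in> dcarrier m n"
  by (simp add: dcarrier_def)
lemma dcarrierD: "A \<in> dcarrier m n \<Longrightarrow> fst A \<in> carrier_mat m n"
  "A \<in> dcarrier m n \<Longrightarrow> snd A \<in> carrier_mat m n"
  by (auto simp add: dcarrier_def)

lemma dmult_carrier[intro]: "A \<in> dcarrier m n \<Longrightarrow> B \<in> dcarrier n p \<Longrightarrow> dmult A B \<in> dcarrier m p"
  by (auto simp: dcarrier_def dmult_def)

lemma dtrans_carrier[intro]: "A \<in> dcarrier m n \<Longrightarrow> dtrans A \<in> dcarrier n m"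
  by (auto simp: dcarrier_def dtrans_def)

lemma dident_carrier[intro]: "dident k \<in> dcarrier k k"
  by (auto simp: dcarrier_def dident_def)

lemma dmult_assoc:
  assumes "A \<in> dcarrier m n" "B \<in> dcarrier n p" "C \<in> dcarrier p q"
  shows "dmult (dmult A B) C = dmult A (dmult B C)"
proof -
  obtain A1 A2 where a: "A = (A1, A2)" by fastforce
  obtain B1 B2 where b: "B = (B1, B2)" by fastforce
  obtain C1 C2 where c: "C = (C1, C2)" by fastforce
  have c1: "A1 \<in> carrier_mat m n" "A2 \<in> carrier_mat m n" "B1 \<in> carrier_mat n p" "B2 \<in> carrier_mat n p"
     "C1 \<in> carrier_mat p q" "C2 \<in> carrier_mat p q" using assms a b c by (auto simp: dcarrier_def)
  have "A1 * B1 * C2 + (A1 * B2 + A2 * B1) * C1 = A1 * (B1 * C2 + B2 * C1) + A2 * (B1 * C1)"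
  proof -
    have "(A1 * B2 + A2 * B1) * C1 = A1 * B2 * C1 + A2 * B1 * C1"
      using c1 by (meson add_mult_distrib_mat mult_carrier_mat)
    moreover have "A1 * (B1 * C2 + B2 * C1) = A1 * (B1 * C2) + A1 * (B2 * C1)"
      using c1 by (meson mult_add_distrib_mat mult_carrier_mat)
    ultimately show ?thesis using c1
      by (simp add: assoc_mult_mat[of _ m n _ p _ q] assoc_add_mat[of _ m q])
  qed
  then show ?thesis using a b c c1 by (simp add: dmult_def assoc_mult_mat[of _ m n _ p _ q])
qed

lemma dtrans_dmult:
  assumes "A \<in> dcarrier m n" "B \<in> dcarrier n p"
  shows "dtrans (dmult A B) = dmult (dtrans B) (dtrans A)"
proof -
  obtain A1 A2 where a: "A = (A1, A2)" by fastforce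
  obtain B1 B2 where b: "B = (B1, B2)" by fastforce
  have c1: "A1 \<in> carrier_mat m n" "A2 \<in> carrier_mat m n" "B1 \<in> carrier_mat n p" "B2 \<in> carrier_mat n p"
    using assms a b by (auto simp: dcarrier_def)
  have "transpose_mat (A1 * B2 + A2 * B1) = transpose_mat B2 * transpose_mat A1 + transpose_mat B1 * transpose_mat A2"
    using c1 by (simp add: transpose_add[of _ m p] transpose_mult[of _ m n])
  moreover have "transpose_mat B2 * transpose_mat A1 + transpose_mat B1 * transpose_mat A2
     = transpose_mat B1 * transpose_mat A2 + transpose_mat B2 * transpose_mat A1"
    using c1 by (meson comm_add_mat mult_carrier_mat transpose_carrier_mat)
  ultimately show ?thesis using a b c1 by (simp add: dtrans_def dmult_def transpose_mult[of _ m n])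
qed

lemma dtrans_dtrans[simp]: "dtrans (dtrans A) = A"
  by (simp add: dtrans_def)

lemma dident_left: "A \<in> dcarrier m n \<Longrightarrow> dmult (dident m) A = A"
  by (cases A) (auto simp: dmult_def dident_def dcarrier_def)
lemma dident_right: "A \<in> dcarrier m n \<Longrightarrow> dmult A (dident n) = A"
  by (cases A) (auto simp: dmult_def dident_def dcarrier_def)
lemma dims_dmult[simp]:
  "dim_row (fst (dmult A B)) = dim_row (fst A)" "dim_col (fst (dmult A B)) = dim_col (fst B)"
  "dim_row (snd (dmult A B)) = dim_row (snd A)" "dim_col (snd (dmult A B)) = dim_col (fst B)"
  by (simp_all add: dmult_def)
lemma dims_dtrans[simp]:
  "dim_row (fst (dtrans A)) = dim_col (fst A)" "dim_col (fst (dtrans A)) = dim_row (fst A)"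
  "dim_row (snd (dtrans A)) = dim_col (snd A)" "dim_col (snd (dtrans A)) = dim_row (snd A)"
  by (simp_all add: dtrans_def)
lemma dassoc:
  assumes "dim_row (snd A) = dim_row (fst A)" "dim_col (snd A) = dim_col (fst A)"
    "dim_row (snd B) = dim_row (fst B)" "dim_col (snd B) = dim_col (fst B)"
    "dim_row (snd C) = dim_row (fst C)" "dim_col (snd C) = dim_col (fst C)"
    "dim_col (fst A) = dim_row (fst B)" "dim_col (fst B) = dim_row (fst C)"
  shows "dmult (dmult A B) C = dmult A (dmult B C)"
proof -
  have a: "A \<in> dcarrier (dim_row (fst A)) (dim_col (fst A))"
    unfolding dcarrier_def carrier_mat_def using assms(1,2) by simp
  have b: "B \<in> dcarrier (dim_col (fst A)) (dim_col (fst B))"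
    unfolding dcarrier_def carrier_mat_def using assms(3,4,7) by simp
  have c: "C \<in> dcarrier (dim_col (fst B)) (dim_col (fst C))"
    unfolding dcarrier_def carrier_mat_def using assms(5,6,8) by simp
  show ?thesis by (rule dmult_assoc[OF a b c])
qed
lemma dcarrier_dims: "A \<in> dcarrier m n \<Longrightarrow> dim_row (fst A) = m \<and> dim_col (fst A) = n \<and> dim_row (snd A) = m \<and> dim_col (snd A) = n"
  by (auto simp: dcarrier_def)
lemma dtrans_conj:
  assumes "U \<in> dcarrier p q" "Z \<in> dcarrier q q"
  shows "dtrans (dmult (dmult U Z) (dtrans U)) = dmult (dmult U (dtrans Z)) (dtrans U)"
proof -
  have UZ: "dmult U Z \<in> dcarrier p q" using assms by blast
  have "dtrans (dmult (dmult U Z) (dtrans U)) = dmult U (dtrans (dmult U Z))"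
    using dtrans_dmult[OF UZ dtrans_carrier[OF assms(1)]] by simp
  also have "\<dots> = dmult U (dmult (dtrans Z) (dtrans U))"
    using dtrans_dmult[OF assms] by simp
  also have "\<dots> = dmult (dmult U (dtrans Z)) (dtrans U)"
    using dmult_assoc[OF assms(1) dtrans_carrier[OF assms(2)] dtrans_carrier[OF assms(1)]] by simp
  finally show ?thesis .
qed

lemma orth_cancel_l:
  assumes "dorthogonal p U" "Z \<in> dcarrier p k"
  shows "dmult (dtrans U) (dmult U Z) = Z" "dmult U (dmult (dtrans U) Z) = Z"
proof -
  have U: "U \<in> dcarrier p p" using assms by (simp add: dorthogonal_def)
  show "dmult (dtrans U) (dmult U Z) = Z"
    using assms U dmult_assoc[of "dtrans U" p p U p Z k] by (simp add: dtrans_carrier dorthogonal_def dident_left)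
  show "dmult U (dmult (dtrans U) Z) = Z"
    using assms U dmult_assoc[of U p p "dtrans U" p Z k] by (simp add: dtrans_carrier dorthogonal_def dident_left)
qed

lemma orth_cancel_r:
  assumes "dorthogonal p U" "Z \<in> dcarrier k p"
  shows "dmult (dmult Z (dtrans U)) U = Z" "dmult (dmult Z U) (dtrans U) = Z"
proof -
  have U: "U \<in> dcarrier p p" using assms by (simp add: dorthogonal_def)
  show "dmult (dmult Z (dtrans U)) U = Z"
    using assms U dmult_assoc[of Z k p "dtrans U" p U p] by (simp add: dtrans_carrier dorthogonal_def dident_right)
  show "dmult (dmult Z U) (dtrans U) = Z"
    using assms U dmult_assoc[of Z k p U p "dtrans U" p] by (simp add: dtrans_carrier dorthogonal_def dident_right)
qed

definition P4 :: "nat \<Rightarrow> nat \<Rightarrow> dmat \<Rightarrow> dmat \<Rightarrow> dmat \<Rightarrow> bool" where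
  "P4 m n M N X \<longleftrightarrow> X \<in> dcarrier n m \<and>
     dmult (dmult M X) M = N \<and> dmult (dmult X M) X = X \<and>
     dtrans (dmult M X) = dmult M X \<and> dtrans (dmult X M) = dmult X M"

lemma conj_inj:
  assumes U: "dorthogonal p U" and V: "dorthogonal q V" and Z: "Z \<in> dcarrier p q" and W: "W \<in> dcarrier p q"
  shows "dmult (dmult U Z) (dtrans V) = dmult (dmult U W) (dtrans V) \<longleftrightarrow> Z = W"
proof
  assume h: "dmult (dmult U Z) (dtrans V) = dmult (dmult U W) (dtrans V)"
  have Uc: "U \<in> dcarrier p p" and Vc: "V \<in> dcarrier q q" using U V by (auto simp: dorthogonal_def)
  have UZ: "dmult U Z \<in> dcarrier p q" and UW: "dmult U W \<in> dcarrier p q" using Uc Z W by blast+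
  have "dmult U Z = dmult (dmult (dmult U Z) (dtrans V)) V" using orth_cancel_r(1)[OF V UZ] by simp
  also have "\<dots> = dmult (dmult (dmult U W) (dtrans V)) V" using h by simp
  also have "\<dots> = dmult U W" using orth_cancel_r(1)[OF V UW] .
  finally have e: "dmult U Z = dmult U W" .
  have "Z = dmult (dtrans U) (dmult U Z)" using orth_cancel_l(1)[OF U Z] by simp
  also have "\<dots> = dmult (dtrans U) (dmult U W)" using e by simp
  also have "\<dots> = W" using orth_cancel_l(1)[OF U W] .
  finally show "Z = W" .
qed simp

lemma orth_l':
  assumes "dorthogonal p U" "dim_row (fst Z) = p" "dim_row (snd Z) = p" "dim_col (snd Z) = dim_col (fst Z)"
  shows "dmult (dtrans U) (dmult U Z) = Z" "dmult U (dmult (dtrans U) Z) = Z"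
  using orth_cancel_l[OF assms(1), of Z "dim_col (fst Z)"] assms by (auto simp: dcarrier_def)

lemmas AS = dassoc dims_dmult dims_dtrans

lemma conj_P4:
  assumes U: "dorthogonal m U" and V: "dorthogonal n V" and M: "M \<in> dcarrier m n" and N: "N \<in> dcarrier m n"
    and X: "X \<in> dcarrier n m"
  shows "P4 m n (dmult (dmult U M) (dtrans V)) (dmult (dmult U N) (dtrans V)) X
     \<longleftrightarrow> P4 m n M N (dmult (dmult (dtrans V) X) U)"
proof -
  have Uc: "U \<in> dcarrier m m" and Vc: "V \<in> dcarrier n n" using U V by (auto simp: dorthogonal_def)
  define Y where "Y = dmult (dmult (dtrans V) X) U"
  have Yc: "Y \<in> dcarrier n m" unfolding Y_def using Vc X Uc by blast
  note dU = dcarrier_dims[OF Uc] and dV = dcarrier_dims[OF Vc] and dM = dcarrier_dims[OF M]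
    and dX = dcarrier_dims[OF X] and dY = dcarrier_dims[OF Yc]
  have XY: "X = dmult (dmult V Y) (dtrans U)"
  proof -
    have "dmult (dmult V Y) (dtrans U) = dmult V (dmult (dtrans V) (dmult (dmult X U) (dtrans U)))"
      unfolding Y_def using dU dV dX by (simp only: AS simp_thms)
    also have "\<dots> = X" using orth_cancel_l(2)[OF V X] orth_cancel_r(2)[OF U X] by simp
    finally show ?thesis by simp
  qed
  have e1: "dmult (dmult (dmult (dmult U M) (dtrans V)) X) (dmult (dmult U M) (dtrans V))
      = dmult (dmult U (dmult (dmult M Y) M)) (dtrans V)"
    unfolding Y_def using dU dV dX dM by (simp only: AS simp_thms)
  have e2: "dmult (dmult X (dmult (dmult U M) (dtrans V))) X = dmult (dmult V (dmult (dmult Y M) Y)) (dtrans U)"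
    apply (subst (1 2) XY) using dU dV dY dM U V by (simp only: AS simp_thms orth_l')
  have e3: "dmult (dmult (dmult U M) (dtrans V)) X = dmult (dmult U (dmult M Y)) (dtrans U)"
    apply (subst XY) using dU dV dY dM U V by (simp only: AS simp_thms orth_l')
  have e4: "dmult X (dmult (dmult U M) (dtrans V)) = dmult (dmult V (dmult Y M)) (dtrans V)"
    apply (subst XY) using dU dV dY dM U V by (simp only: AS simp_thms orth_l')
  have MY: "dmult M Y \<in> dcarrier m m" "dmult Y M \<in> dcarrier n n" "dmult (dmult M Y) M \<in> dcarrier m n"
     "dmult (dmult Y M) Y \<in> dcarrier n m" using M Yc by blast+
  have i1: "dmult (dmult U (dmult (dmult M Y) M)) (dtrans V) = dmult (dmult U N) (dtrans V) \<longleftrightarrow> dmult (dmult M Y) M = N"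
    by (rule conj_inj[OF U V MY(3) N])
  have i2: "dmult (dmult V (dmult (dmult Y M) Y)) (dtrans U) = X \<longleftrightarrow> dmult (dmult Y M) Y = Y"
    using conj_inj[OF V U MY(4) Yc] XY by simp
  have i3: "dtrans (dmult (dmult U (dmult M Y)) (dtrans U)) = dmult (dmult U (dmult M Y)) (dtrans U) \<longleftrightarrow> dtrans (dmult M Y) = dmult M Y"
    unfolding dtrans_conj[OF Uc MY(1)] by (rule conj_inj[OF U U dtrans_carrier[OF MY(1)] MY(1)])
  have i4: "dtrans (dmult (dmult V (dmult Y M)) (dtrans V)) = dmult (dmult V (dmult Y M)) (dtrans V) \<longleftrightarrow> dtrans (dmult Y M) = dmult Y M"
    unfolding dtrans_conj[OF Vc MY(2)] by (rule conj_inj[OF V V dtrans_carrier[OF MY(2)] MY(2)])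
  show ?thesis
    unfolding P4_def unfolding e1 e2 unfolding e3 e4 unfolding i1 i2 i3 i4 Y_def[symmetric] using X Yc by simp
qed
definition dg :: "nat \<Rightarrow> nat \<Rightarrow> real mat \<Rightarrow> nat \<Rightarrow> real" where
  "dg m n M i = (if i < min m n then M $$ (i, i) else 0)"

lemma diag_mult_left:
  assumes M: "M \<in> carrier_mat m n" and D: "\<forall>i<m. \<forall>j<n. i \<noteq> j \<longrightarrow> M $$ (i, j) = 0"
    and N: "N \<in> carrier_mat n p" and ij: "i < m" "j < p"
  shows "(M * N) $$ (i, j) = dg m n M i * N $$ (i, j)"
proof -
  have "(M * N) $$ (i, j) = (\<Sum>k\<in>{0..<n}. M $$ (i, k) * N $$ (k, j))"
    using assms by (simp add: index_mult_mat scalar_prod_def)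
  also have "\<dots> = (\<Sum>k\<in>{0..<n}. if k = i then M $$ (i, i) * N $$ (i, j) else 0)"
    by (rule sum.cong) (use D ij in auto)
  also have "\<dots> = dg m n M i * N $$ (i, j)"
    using ij by (simp add: dg_def)
  finally show ?thesis .
qed

lemma diag_mult_right:
  assumes M: "M \<in> carrier_mat m n" and D: "\<forall>i<m. \<forall>j<n. i \<noteq> j \<longrightarrow> M $$ (i, j) = 0"
    and N: "N \<in> carrier_mat p m" and ij: "i < p" "j < n"
  shows "(N * M) $$ (i, j) = N $$ (i, j) * dg m n M j"
proof -
  have "(N * M) $$ (i, j) = (\<Sum>k\<in>{0..<m}. N $$ (i, k) * M $$ (k, j))"
    using assms by (simp add: index_mult_mat scalar_prod_def)
  also have "\<dots> = (\<Sum>k\<in>{0..<m}. if k = j then N $$ (i, j) * M $$ (j, j) else 0)"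
    by (rule sum.cong) (use D ij in auto)
  also have "\<dots> = N $$ (i, j) * dg m n M j"
    using ij by (simp add: dg_def)
  finally show ?thesis .
qed

lemma mult_entry_sum:
  assumes "A \<in> carrier_mat p n" "B \<in> carrier_mat n q" "i < p" "j < q"
  shows "(A * B) $$ (i, j) = (\<Sum>k<n. A $$ (i, k) * B $$ (k, j))"
  using assms by (simp add: index_mult_mat scalar_prod_def atLeast0LessThan)

lemma dg_nz: "dg m n M j \<noteq> 0 \<Longrightarrow> j < m \<and> j < n"
  by (auto simp: dg_def split: if_splits)

lemma dg_out: "\<not> j < m \<Longrightarrow> dg m n M j = 0" "\<not> j < n \<Longrightarrow> dg m n M j = 0"
  by (auto simp: dg_def)

context
  fixes m n :: nat and Ss Sd P Q :: "real mat"
  assumes Ss: "Ss \<in> carrier_mat m n" and Sd: "Sd \<in> carrier_mat m n"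
   and dS: "\<forall>i<m. \<forall>j<n. i \<noteq> j \<longrightarrow> Ss $$ (i, j) = 0"
   and dD: "\<forall>i<m. \<forall>j<n. i \<noteq> j \<longrightarrow> Sd $$ (i, j) = 0"
   and P: "P \<in> carrier_mat n m" and Q: "Q \<in> carrier_mat n m"
begin

lemma E_SY:
  assumes "i < m" "j < m"
  shows "(Ss * P) $$ (i, j) = dg m n Ss i * P $$ (i, j)"
    "(Ss * Q + Sd * P) $$ (i, j) = dg m n Ss i * Q $$ (i, j) + dg m n Sd i * P $$ (i, j)"
  using assms Ss Sd P Q diag_mult_left[OF Ss dS] diag_mult_left[OF Sd dD] by auto

lemma E_YS:
  assumes "i < n" "j < n"
  shows "(P * Ss) $$ (i, j) = P $$ (i, j) * dg m n Ss j"
    "(P * Sd + Q * Ss) $$ (i, j) = P $$ (i, j) * dg m n Sd j + Q $$ (i, j) * dg m n Ss j"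
  using assms Ss Sd P Q diag_mult_right[OF Ss dS] diag_mult_right[OF Sd dD] by auto

lemma E_SYS:
  assumes "i < m" "j < n"
  shows "(Ss * P * Ss) $$ (i, j) = dg m n Ss i * P $$ (i, j) * dg m n Ss j"
    "(Ss * P * Sd + (Ss * Q + Sd * P) * Ss) $$ (i, j) =
       dg m n Ss i * P $$ (i, j) * dg m n Sd j + (dg m n Ss i * Q $$ (i, j) + dg m n Sd i * P $$ (i, j)) * dg m n Ss j"
proof -
  have c: "Ss * P \<in> carrier_mat m m" "Ss * Q + Sd * P \<in> carrier_mat m m" using Ss Sd P Q by auto
  show "(Ss * P * Ss) $$ (i, j) = dg m n Ss i * P $$ (i, j) * dg m n Ss j"
    using diag_mult_right[OF Ss dS c(1)] assms E_SY dg_out[of j m n Ss] by (cases "j < m") auto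
  have "(Ss * P * Sd + (Ss * Q + Sd * P) * Ss) $$ (i, j) = (Ss * P * Sd) $$ (i, j) + ((Ss * Q + Sd * P) * Ss) $$ (i, j)"
    using assms c Ss Sd by simp
  then show "(Ss * P * Sd + (Ss * Q + Sd * P) * Ss) $$ (i, j) =
       dg m n Ss i * P $$ (i, j) * dg m n Sd j + (dg m n Ss i * Q $$ (i, j) + dg m n Sd i * P $$ (i, j)) * dg m n Ss j"
    using diag_mult_right[OF Ss dS c(2)] diag_mult_right[OF Sd dD c(1)] assms E_SY dg_out[of j m n Ss] dg_out[of j m n Sd]
    by (cases "j < m") auto
qed

lemma E_YSY:
  assumes "i < n" "j < m"
  shows "(P * Ss * P) $$ (i, j) = (\<Sum>k<n. P $$ (i, k) * dg m n Ss k * P $$ (k, j))"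
    "(P * Ss * Q + (P * Sd + Q * Ss) * P) $$ (i, j) =
       (\<Sum>k<n. P $$ (i, k) * dg m n Ss k * Q $$ (k, j) + (P $$ (i, k) * dg m n Sd k + Q $$ (i, k) * dg m n Ss k) * P $$ (k, j))"
proof -
  have c: "P * Ss \<in> carrier_mat n n" "P * Sd + Q * Ss \<in> carrier_mat n n" using Ss Sd P Q by auto
  show "(P * Ss * P) $$ (i, j) = (\<Sum>k<n. P $$ (i, k) * dg m n Ss k * P $$ (k, j))"
    using mult_entry_sum[OF c(1) P assms] E_YS assms by simp
  have "(P * Ss * Q + (P * Sd + Q * Ss) * P) $$ (i, j) = (P * Ss * Q) $$ (i, j) + ((P * Sd + Q * Ss) * P) $$ (i, j)"
    using assms c P Q by simp
  also have "\<dots> = (\<Sum>k<n. P $$ (i, k) * dg m n Ss k * Q $$ (k, j)) + (\<Sum>k<n. (P $$ (i, k) * dg m n Sd k + Q $$ (i, k) * dg m n Ss k) * P $$ (k, j))"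
    using mult_entry_sum[OF c(1) Q assms] mult_entry_sum[OF c(2) P assms] E_YS assms by simp
  finally show "(P * Ss * Q + (P * Sd + Q * Ss) * P) $$ (i, j) =
       (\<Sum>k<n. P $$ (i, k) * dg m n Ss k * Q $$ (k, j) + (P $$ (i, k) * dg m n Sd k + Q $$ (i, k) * dg m n Ss k) * P $$ (k, j))"
    by (simp add: sum.distrib)
qed

end
definition pv :: "(nat \<Rightarrow> real) \<Rightarrow> nat \<Rightarrow> nat \<Rightarrow> real" where
  "pv a i j = (if i = j \<and> a i \<noteq> 0 then 1 / a i else 0)"
definition qv :: "(nat \<Rightarrow> real) \<Rightarrow> (nat \<Rightarrow> real) \<Rightarrow> nat \<Rightarrow> nat \<Rightarrow> real" where
  "qv a b i j = (if i = j \<and> a i \<noteq> 0 then - b i / (a i)^2 else 0)"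

definition Cs :: "nat \<Rightarrow> nat \<Rightarrow> (nat \<Rightarrow> real) \<Rightarrow> (nat \<Rightarrow> real) \<Rightarrow> (nat \<Rightarrow> nat \<Rightarrow> real) \<Rightarrow> (nat \<Rightarrow> nat \<Rightarrow> real) \<Rightarrow> bool" where
  "Cs m n a b p q \<longleftrightarrow>
    (\<forall>i<m. \<forall>j<n. a i * p i j * a j = (if i = j then a i else 0)) \<and>
    (\<forall>i<m. \<forall>j<n. a i * p i j * b j + (a i * q i j + b i * p i j) * a j = (if i = j \<and> a i \<noteq> 0 then b i else 0)) \<and>
    (\<forall>i<n. \<forall>j<m. (\<Sum>k<n. p i k * a k * p k j) = p i j) \<and>
    (\<forall>i<n. \<forall>j<m. (\<Sum>k<n. p i k * a k * q k j + (p i k * b k + q i k * a k) * p k j) = q i j) \<and>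
    (\<forall>i<m. \<forall>j<m. a j * p j i = a i * p i j) \<and>
    (\<forall>i<m. \<forall>j<m. a j * q j i + b j * p j i = a i * q i j + b i * p i j) \<and>
    (\<forall>i<n. \<forall>j<n. p j i * a i = p i j * a j) \<and>
    (\<forall>i<n. \<forall>j<n. p j i * b i + q j i * a i = p i j * b j + q i j * a j)"

lemma core_abs:
  fixes a b :: "nat \<Rightarrow> real" and p q :: "nat \<Rightarrow> nat \<Rightarrow> real"
  assumes ar: "\<And>k. a k \<noteq> 0 \<Longrightarrow> k < m \<and> k < n"
    and br: "\<And>k. b k \<noteq> 0 \<Longrightarrow> k < m \<and> k < n"
    and pr: "\<And>i j. p i j \<noteq> 0 \<Longrightarrow> i < n \<and> j < m"
    and qr: "\<And>i j. q i j \<noteq> 0 \<Longrightarrow> i < n \<and> j < m"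
  shows "Cs m n a b p q \<longleftrightarrow> (\<forall>i j. p i j = pv a i j \<and> q i j = qv a b i j)"
proof
  assume C: "Cs m n a b p q"
  note C1 = C[unfolded Cs_def, THEN conjunct1, rule_format]
  note C2 = C[unfolded Cs_def, THEN conjunct2, THEN conjunct1, rule_format]
  note C3 = C[unfolded Cs_def, THEN conjunct2, THEN conjunct2, THEN conjunct1, rule_format]
  note C4 = C[unfolded Cs_def, THEN conjunct2, THEN conjunct2, THEN conjunct2, THEN conjunct1, rule_format]
  note C5 = C[unfolded Cs_def, THEN conjunct2, THEN conjunct2, THEN conjunct2, THEN conjunct2, THEN conjunct1, rule_format]
  note C6 = C[unfolded Cs_def, THEN conjunct2, THEN conjunct2, THEN conjunct2, THEN conjunct2, THEN conjunct2, THEN conjunct1, rule_format]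
  note C7 = C[unfolded Cs_def, THEN conjunct2, THEN conjunct2, THEN conjunct2, THEN conjunct2, THEN conjunct2, THEN conjunct2, THEN conjunct1, rule_format]
  note C8 = C[unfolded Cs_def, THEN conjunct2, THEN conjunct2, THEN conjunct2, THEN conjunct2, THEN conjunct2, THEN conjunct2, THEN conjunct2, rule_format]
  have F2: "p i j = 0 \<and> q i j = 0" if "a i \<noteq> 0" "a j = 0" for i j
  proof (cases "j < m")
    case True
    have im: "i < m" "i < n" using ar that(1) by auto
    have p0: "p i j = 0" using C5[OF im(1) True] that by auto
    have e6: "b j * p j i = a i * q i j" using C6[OF im(1) True] that p0 by auto
    show ?thesis
    proof (cases "j < n")
      case True
      have "p j i * a i = 0" using C7[OF im(2) True] that p0 by auto
      then show ?thesis using e6 p0 that by auto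
    next
      case False
      then have "b j = 0" using br by force
      then show ?thesis using e6 p0 that by simp
    qed
  next
    case False
    then show ?thesis using pr qr by fastforce
  qed
  have F3: "p i j = 0 \<and> q i j = 0" if "a i = 0" "a j \<noteq> 0" for i j
  proof (cases "i < n")
    case True
    have jm: "j < m" "j < n" using ar that(2) by auto
    have p0: "p i j = 0" using C7[OF True jm(2)] that by auto
    have e8: "p j i * b i = q i j * a j" using C8[OF True jm(2)] that p0 by auto
    show ?thesis
    proof (cases "i < m")
      case True
      have "a j * p j i = 0" using C5[OF True jm(1)] that p0 by auto
      then show ?thesis using e8 p0 that by auto
    next
      case False
      then have "b i = 0" using br by force
      then show ?thesis using e8 p0 that by simp
    qed
  next
    case False
    then show ?thesis using pr qr by fastforce
  qed
  have F4p: "p i j = 0" if "a i = 0" "a j = 0" for i j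
  proof (cases "i < n \<and> j < m")
    case True
    have "(\<Sum>k<n. p i k * a k * p k j) = 0"
      by (rule sum.neutral) (use F3 that in force)
    then show ?thesis using C3[of i j] True by auto
  next
    case False
    then show ?thesis using pr by blast
  qed
  have F4q: "q i j = 0" if "a i = 0" "a j = 0" for i j
  proof (cases "i < n \<and> j < m")
    case True
    have "(\<Sum>k<n. p i k * a k * q k j + (p i k * b k + q i k * a k) * p k j) = 0"
    proof (rule sum.neutral, intro ballI)
      fix k assume "k \<in> {..<n}"
      show "p i k * a k * q k j + (p i k * b k + q i k * a k) * p k j = 0"
      proof (cases "a k = 0")
        case True
        then show ?thesis using F4p[OF that(1) True] by simp
      next
        case False
        then show ?thesis using F3[OF that(1) False] by simp
      qed
    qed
    then show ?thesis using C4[of i j] True by auto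
  next
    case False
    then show ?thesis using qr by blast
  qed
  have F1: "p i j = pv a i j \<and> q i j = qv a b i j" if "a i \<noteq> 0" "a j \<noteq> 0" for i j
  proof -
    have r: "i < m" "i < n" "j < m" "j < n" using ar that by auto
    have c1: "a i * p i j * a j = (if i = j then a i else 0)" using C1[OF r(1) r(4)] by auto
    have c2: "a i * p i j * b j + (a i * q i j + b i * p i j) * a j = (if i = j then b i else 0)" using C2[OF r(1) r(4)] that by auto
    show ?thesis
    proof (cases "i = j")
      case True
      have pp: "p i j = 1 / a i" using c1 True that by (simp add: field_simps)
      have ap: "a i * p i j = 1" using pp that by simp
      have "b i * (a i * p i j) + a i * a i * q i j + b i * (a i * p i j) = b i"
        using c2 True by (simp add: algebra_simps)
      then have "q i j * (a i)^2 = - b i" unfolding ap by (simp add: algebra_simps power2_eq_square)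
      then have "q i j = - b i / (a i)^2" using that by (simp add: field_simps)
      then show ?thesis using pp True that by (simp add: pv_def qv_def)
    next
      case False
      have pp: "p i j = 0" using c1 False that by simp
      have "q i j = 0" using c2 False that pp by simp
      then show ?thesis using pp False by (simp add: pv_def qv_def)
    qed
  qed
  show "\<forall>i j. p i j = pv a i j \<and> q i j = qv a b i j"
  proof (intro allI)
    fix i j
    show "p i j = pv a i j \<and> q i j = qv a b i j"
      using F1[of i j] F2[of i j] F3[of i j] F4p[of i j] F4q[of i j]
      by (cases "a i = 0"; cases "a j = 0") (auto simp: pv_def qv_def)
  qed
next
  assume H: "\<forall>i j. p i j = pv a i j \<and> q i j = qv a b i j"
  then have hp: "p = pv a" and hq: "q = qv a b" by auto
  have s1: "(\<Sum>k<n. pv a i k * a k * pv a k j) = pv a i j" if "i < n" for i j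
  proof -
    have "(\<Sum>k<n. pv a i k * a k * pv a k j) = (\<Sum>k<n. if k = i then pv a i i * a i * pv a i j else 0)"
      by (rule sum.cong) (auto simp: pv_def)
    also have "\<dots> = pv a i i * a i * pv a i j" using that by simp
    also have "\<dots> = pv a i j" by (auto simp: pv_def)
    finally show ?thesis .
  qed
  have s2: "(\<Sum>k<n. pv a i k * a k * qv a b k j + (pv a i k * b k + qv a b i k * a k) * pv a k j) = qv a b i j" if "i < n" for i j
  proof -
    have "(\<Sum>k<n. pv a i k * a k * qv a b k j + (pv a i k * b k + qv a b i k * a k) * pv a k j)
       = (\<Sum>k<n. if k = i then pv a i i * a i * qv a b i j + (pv a i i * b i + qv a b i i * a i) * pv a i j else 0)"
      by (rule sum.cong) (auto simp: pv_def qv_def)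
    also have "\<dots> = pv a i i * a i * qv a b i j + (pv a i i * b i + qv a b i i * a i) * pv a i j" using that by simp
    also have "\<dots> = qv a b i j" by (auto simp: pv_def qv_def field_simps power2_eq_square)
    finally show ?thesis .
  qed
  show "Cs m n a b p q"
    unfolding Cs_def hp hq using s1 s2
    by (auto simp: pv_def qv_def field_simps power2_eq_square)
qed
lemma mat_eq_entries:
  "A \<in> carrier_mat r c \<Longrightarrow> B \<in> carrier_mat r c \<Longrightarrow> (A = B) \<longleftrightarrow> (\<forall>i<r. \<forall>j<c. A $$ (i, j) = B $$ (i, j))"
  by (auto intro: eq_matI)

definition Dp :: "nat \<Rightarrow> nat \<Rightarrow> dmat \<Rightarrow> dmat" where
  "Dp m n S = (mat n m (\<lambda>(i, j). pv (dg m n (fst S)) i j), mat n m (\<lambda>(i, j). qv (dg m n (fst S)) (dg m n (snd S)) i j))"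

definition grd :: "nat \<Rightarrow> nat \<Rightarrow> real mat \<Rightarrow> nat \<Rightarrow> nat \<Rightarrow> real" where
  "grd n m P i j = (if i < n \<and> j < m then P $$ (i, j) else 0)"

context
  fixes m n :: nat and Ss Sd P Q :: "real mat"
  assumes Ss: "Ss \<in> carrier_mat m n" and Sd: "Sd \<in> carrier_mat m n"
   and dS: "\<forall>i<m. \<forall>j<n. i \<noteq> j \<longrightarrow> Ss $$ (i, j) = 0"
   and dD: "\<forall>i<m. \<forall>j<n. i \<noteq> j \<longrightarrow> Sd $$ (i, j) = 0"
   and P: "P \<in> carrier_mat n m" and Q: "Q \<in> carrier_mat n m"
begin

abbreviation "aa \<equiv> dg m n Ss"
abbreviation "bb \<equiv> dg m n Sd"
abbreviation "pp \<equiv> grd n m P"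
abbreviation "qq \<equiv> grd n m Q"

lemma Q1: "(Ss * P * Ss = mat m n (\<lambda>(i, j). Ss $$ (i, j))) \<longleftrightarrow>
   (\<forall>i<m. \<forall>j<n. aa i * pp i j * aa j = (if i = j then aa i else 0))"
proof -
  have "(Ss * P * Ss = mat m n (\<lambda>(i, j). Ss $$ (i, j))) \<longleftrightarrow>
    (\<forall>i<m. \<forall>j<n. (Ss * P * Ss) $$ (i, j) = Ss $$ (i, j))"
    using Ss P by (subst mat_eq_entries[of _ m n]) auto
  also have "\<dots> \<longleftrightarrow> (\<forall>i<m. \<forall>j<n. aa i * pp i j * aa j = (if i = j then aa i else 0))"
  proof (intro all_cong1 imp_cong refl)
    fix i j assume ij: "i < m" "j < n"
    show "((Ss * P * Ss) $$ (i, j) = Ss $$ (i, j)) = (aa i * pp i j * aa j = (if i = j then aa i else 0))"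
      using E_SYS(1)[OF Ss Sd dS dD P Q ij] ij dS
      by (cases "i < n"; cases "j < m") (auto simp: grd_def dg_def)
  qed
  finally show ?thesis .
qed


lemma Q2: "(Ss * P * Sd + (Ss * Q + Sd * P) * Ss = mat m n (\<lambda>(i, j). if Ss $$ (i, j) \<noteq> 0 then Sd $$ (i, j) else 0)) \<longleftrightarrow>
   (\<forall>i<m. \<forall>j<n. aa i * pp i j * bb j + (aa i * qq i j + bb i * pp i j) * aa j = (if i = j \<and> aa i \<noteq> 0 then bb i else 0))"
proof -
  have c: "Ss * P * Sd + (Ss * Q + Sd * P) * Ss \<in> carrier_mat m n" using Ss Sd P Q by auto
  have "(Ss * P * Sd + (Ss * Q + Sd * P) * Ss = mat m n (\<lambda>(i, j). if Ss $$ (i, j) \<noteq> 0 then Sd $$ (i, j) else 0)) \<longleftrightarrow>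
    (\<forall>i<m. \<forall>j<n. (Ss * P * Sd + (Ss * Q + Sd * P) * Ss) $$ (i, j) = (if Ss $$ (i, j) \<noteq> 0 then Sd $$ (i, j) else 0))"
    using c by (subst mat_eq_entries[of _ m n]) auto
  also have "\<dots> \<longleftrightarrow> (\<forall>i<m. \<forall>j<n. aa i * pp i j * bb j + (aa i * qq i j + bb i * pp i j) * aa j = (if i = j \<and> aa i \<noteq> 0 then bb i else 0))"
  proof (intro all_cong1 imp_cong refl)
    fix i j assume ij: "i < m" "j < n"
    show "((Ss * P * Sd + (Ss * Q + Sd * P) * Ss) $$ (i, j) = (if Ss $$ (i, j) \<noteq> 0 then Sd $$ (i, j) else 0)) =
      (aa i * pp i j * bb j + (aa i * qq i j + bb i * pp i j) * aa j = (if i = j \<and> aa i \<noteq> 0 then bb i else 0))"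
      using E_SYS(2)[OF Ss Sd dS dD P Q ij] ij dS
      by (cases "i < n"; cases "j < m") (auto simp: grd_def dg_def)
  qed
  finally show ?thesis .
qed

lemma Q3: "(P * Ss * P = P) \<longleftrightarrow> (\<forall>i<n. \<forall>j<m. (\<Sum>k<n. pp i k * aa k * pp k j) = pp i j)"
proof -
  have "(P * Ss * P = P) \<longleftrightarrow> (\<forall>i<n. \<forall>j<m. (P * Ss * P) $$ (i, j) = P $$ (i, j))"
    using Ss P by (subst mat_eq_entries[of _ n m]) auto
  also have "\<dots> \<longleftrightarrow> (\<forall>i<n. \<forall>j<m. (\<Sum>k<n. pp i k * aa k * pp k j) = pp i j)"
  proof (intro all_cong1 imp_cong refl)
    fix i j assume ij: "i < n" "j < m"
    have "(\<Sum>k<n. P $$ (i, k) * aa k * P $$ (k, j)) = (\<Sum>k<n. pp i k * aa k * pp k j)"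
      by (rule sum.cong) (use ij in \<open>auto simp: grd_def dg_def\<close>)
    then show "((P * Ss * P) $$ (i, j) = P $$ (i, j)) = ((\<Sum>k<n. pp i k * aa k * pp k j) = pp i j)"
      using E_YSY(1)[OF Ss Sd dS dD P Q ij] ij by (simp add: grd_def)
  qed
  finally show ?thesis .
qed

lemma Q4: "(P * Ss * Q + (P * Sd + Q * Ss) * P = Q) \<longleftrightarrow>
  (\<forall>i<n. \<forall>j<m. (\<Sum>k<n. pp i k * aa k * qq k j + (pp i k * bb k + qq i k * aa k) * pp k j) = qq i j)"
proof -
  have c: "P * Ss * Q + (P * Sd + Q * Ss) * P \<in> carrier_mat n m" using Ss Sd P Q by auto
  have "(P * Ss * Q + (P * Sd + Q * Ss) * P = Q) \<longleftrightarrow> (\<forall>i<n. \<forall>j<m. (P * Ss * Q + (P * Sd + Q * Ss) * P) $$ (i, j) = Q $$ (i, j))"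
    using c Q by (subst mat_eq_entries[of _ n m]) auto
  also have "\<dots> \<longleftrightarrow> (\<forall>i<n. \<forall>j<m. (\<Sum>k<n. pp i k * aa k * qq k j + (pp i k * bb k + qq i k * aa k) * pp k j) = qq i j)"
  proof (intro all_cong1 imp_cong refl)
    fix i j assume ij: "i < n" "j < m"
    have "(\<Sum>k<n. P $$ (i, k) * aa k * Q $$ (k, j) + (P $$ (i, k) * bb k + Q $$ (i, k) * aa k) * P $$ (k, j))
       = (\<Sum>k<n. pp i k * aa k * qq k j + (pp i k * bb k + qq i k * aa k) * pp k j)"
      by (rule sum.cong) (use ij in \<open>auto simp: grd_def dg_def\<close>)
    then show "((P * Ss * Q + (P * Sd + Q * Ss) * P) $$ (i, j) = Q $$ (i, j)) =
      ((\<Sum>k<n. pp i k * aa k * qq k j + (pp i k * bb k + qq i k * aa k) * pp k j) = qq i j)"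
      using E_YSY(2)[OF Ss Sd dS dD P Q ij] ij by (simp add: grd_def)
  qed
  finally show ?thesis .
qed

lemma Q5: "(transpose_mat (Ss * P) = Ss * P) \<longleftrightarrow> (\<forall>i<m. \<forall>j<m. aa j * pp j i = aa i * pp i j)"
proof -
  have c: "Ss * P \<in> carrier_mat m m" using Ss P by auto
  have "(transpose_mat (Ss * P) = Ss * P) \<longleftrightarrow> (\<forall>i<m. \<forall>j<m. (Ss * P) $$ (j, i) = (Ss * P) $$ (i, j))"
    using c by (subst mat_eq_entries[of _ m m]) (auto simp: carrier_matD[OF Ss] carrier_matD[OF P] carrier_matD[OF Sd] carrier_matD[OF Q])
  also have "\<dots> \<longleftrightarrow> (\<forall>i<m. \<forall>j<m. aa j * pp j i = aa i * pp i j)"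
  proof (intro all_cong1 imp_cong refl)
    fix i j assume ij: "i < m" "j < m"
    show "((Ss * P) $$ (j, i) = (Ss * P) $$ (i, j)) = (aa j * pp j i = aa i * pp i j)"
      using E_SY(1)[OF Ss Sd dS dD P Q ij] E_SY(1)[OF Ss Sd dS dD P Q ij(2,1)] ij
      by (cases "i < n"; cases "j < n") (auto simp: grd_def dg_def)
  qed
  finally show ?thesis .
qed

lemma Q6: "(transpose_mat (Ss * Q + Sd * P) = Ss * Q + Sd * P) \<longleftrightarrow>
   (\<forall>i<m. \<forall>j<m. aa j * qq j i + bb j * pp j i = aa i * qq i j + bb i * pp i j)"
proof -
  have c: "Ss * Q + Sd * P \<in> carrier_mat m m" using Ss Sd P Q by auto
  have "(transpose_mat (Ss * Q + Sd * P) = Ss * Q + Sd * P) \<longleftrightarrow> (\<forall>i<m. \<forall>j<m. (Ss * Q + Sd * P) $$ (j, i) = (Ss * Q + Sd * P) $$ (i, j))"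
    using c by (subst mat_eq_entries[of _ m m]) (auto simp: carrier_matD[OF Ss] carrier_matD[OF P] carrier_matD[OF Sd] carrier_matD[OF Q])
  also have "\<dots> \<longleftrightarrow> (\<forall>i<m. \<forall>j<m. aa j * qq j i + bb j * pp j i = aa i * qq i j + bb i * pp i j)"
  proof (intro all_cong1 imp_cong refl)
    fix i j assume ij: "i < m" "j < m"
    show "((Ss * Q + Sd * P) $$ (j, i) = (Ss * Q + Sd * P) $$ (i, j)) = (aa j * qq j i + bb j * pp j i = aa i * qq i j + bb i * pp i j)"
      using E_SY(2)[OF Ss Sd dS dD P Q ij] E_SY(2)[OF Ss Sd dS dD P Q ij(2,1)] ij
      by (cases "i < n"; cases "j < n") (auto simp: grd_def dg_def)
  qed
  finally show ?thesis .
qed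

lemma Q7: "(transpose_mat (P * Ss) = P * Ss) \<longleftrightarrow> (\<forall>i<n. \<forall>j<n. pp j i * aa i = pp i j * aa j)"
proof -
  have c: "P * Ss \<in> carrier_mat n n" using Ss P by auto
  have "(transpose_mat (P * Ss) = P * Ss) \<longleftrightarrow> (\<forall>i<n. \<forall>j<n. (P * Ss) $$ (j, i) = (P * Ss) $$ (i, j))"
    using c by (subst mat_eq_entries[of _ n n]) (auto simp: carrier_matD[OF Ss] carrier_matD[OF P] carrier_matD[OF Sd] carrier_matD[OF Q])
  also have "\<dots> \<longleftrightarrow> (\<forall>i<n. \<forall>j<n. pp j i * aa i = pp i j * aa j)"
  proof (intro all_cong1 imp_cong refl)
    fix i j assume ij: "i < n" "j < n"
    show "((P * Ss) $$ (j, i) = (P * Ss) $$ (i, j)) = (pp j i * aa i = pp i j * aa j)"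
      using E_YS(1)[OF Ss Sd dS dD P Q ij] E_YS(1)[OF Ss Sd dS dD P Q ij(2,1)] ij
      by (cases "i < m"; cases "j < m") (auto simp: grd_def dg_def)
  qed
  finally show ?thesis .
qed

lemma Q8: "(transpose_mat (P * Sd + Q * Ss) = P * Sd + Q * Ss) \<longleftrightarrow>
   (\<forall>i<n. \<forall>j<n. pp j i * bb i + qq j i * aa i = pp i j * bb j + qq i j * aa j)"
proof -
  have c: "P * Sd + Q * Ss \<in> carrier_mat n n" using Ss Sd P Q by auto
  have "(transpose_mat (P * Sd + Q * Ss) = P * Sd + Q * Ss) \<longleftrightarrow> (\<forall>i<n. \<forall>j<n. (P * Sd + Q * Ss) $$ (j, i) = (P * Sd + Q * Ss) $$ (i, j))"
    using c by (subst mat_eq_entries[of _ n n]) (auto simp: carrier_matD[OF Ss] carrier_matD[OF P] carrier_matD[OF Sd] carrier_matD[OF Q])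
  also have "\<dots> \<longleftrightarrow> (\<forall>i<n. \<forall>j<n. pp j i * bb i + qq j i * aa i = pp i j * bb j + qq i j * aa j)"
  proof (intro all_cong1 imp_cong refl)
    fix i j assume ij: "i < n" "j < n"
    show "((P * Sd + Q * Ss) $$ (j, i) = (P * Sd + Q * Ss) $$ (i, j)) = (pp j i * bb i + qq j i * aa i = pp i j * bb j + qq i j * aa j)"
      using E_YS(2)[OF Ss Sd dS dD P Q ij] E_YS(2)[OF Ss Sd dS dD P Q ij(2,1)] ij
      by (cases "i < m"; cases "j < m") (auto simp: grd_def dg_def)
  qed
  finally show ?thesis .
qed

lemma P4_Cs: "P4 m n (Ss, Sd) (app_part m n (Ss, Sd)) (P, Q) \<longleftrightarrow> Cs m n aa bb pp qq"
proof -
  have e1: "dmult (dmult (Ss, Sd) (P, Q)) (Ss, Sd) = (Ss * P * Ss, Ss * P * Sd + (Ss * Q + Sd * P) * Ss)"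
    by (simp add: dmult_def)
  have e2: "dmult (dmult (P, Q) (Ss, Sd)) (P, Q) = (P * Ss * P, P * Ss * Q + (P * Sd + Q * Ss) * P)"
    by (simp add: dmult_def)
  have e3: "dmult (Ss, Sd) (P, Q) = (Ss * P, Ss * Q + Sd * P)" by (simp add: dmult_def)
  have e4: "dmult (P, Q) (Ss, Sd) = (P * Ss, P * Sd + Q * Ss)" by (simp add: dmult_def)
  have e5: "app_part m n (Ss, Sd) = (mat m n (\<lambda>(i, j). Ss $$ (i, j)), mat m n (\<lambda>(i, j). if Ss $$ (i, j) \<noteq> 0 then Sd $$ (i, j) else 0))"
    unfolding app_part_def fst_conv snd_conv ..
  have e6: "dtrans (A, B) = (transpose_mat A, transpose_mat B)" for A B by (simp add: dtrans_def)
  have c: "(P, Q) \<in> dcarrier n m" using P Q by (simp add: dcarrier_def)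
  have A: "P4 m n (Ss, Sd) (app_part m n (Ss, Sd)) (P, Q) \<longleftrightarrow>
     (Ss * P * Ss = mat m n (\<lambda>(i, j). Ss $$ (i, j)) \<and>
      Ss * P * Sd + (Ss * Q + Sd * P) * Ss = mat m n (\<lambda>(i, j). if Ss $$ (i, j) \<noteq> 0 then Sd $$ (i, j) else 0)) \<and>
     (P * Ss * P = P \<and> P * Ss * Q + (P * Sd + Q * Ss) * P = Q) \<and>
     (transpose_mat (Ss * P) = Ss * P \<and> transpose_mat (Ss * Q + Sd * P) = Ss * Q + Sd * P) \<and>
     (transpose_mat (P * Ss) = P * Ss \<and> transpose_mat (P * Sd + Q * Ss) = P * Sd + Q * Ss)"
    unfolding P4_def unfolding e1 e2 unfolding e3 e4 e5 e6 prod.inject using c by (simp only: simp_thms)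
  show ?thesis unfolding A Q1 Q2 Q3 Q4 Q5 Q6 Q7 Q8 Cs_def by (simp only: conj_assoc)
qed

lemma Dp_eq: "((P, Q) = Dp m n (Ss, Sd)) \<longleftrightarrow> (\<forall>i j. pp i j = pv aa i j \<and> qq i j = qv aa bb i j)"
proof -
  have pv0: "pv aa i j = 0" "qv aa bb i j = 0" if "\<not> (i < n \<and> j < m)" for i j
    using that dg_nz[of m n Ss i] by (auto simp: pv_def qv_def)
  have "((P, Q) = Dp m n (Ss, Sd)) \<longleftrightarrow> (\<forall>i<n. \<forall>j<m. P $$ (i, j) = pv aa i j \<and> Q $$ (i, j) = qv aa bb i j)"
    unfolding Dp_def using P Q
    by (auto simp: mat_eq_entries[of P n m] mat_eq_entries[of Q n m])
  also have "\<dots> \<longleftrightarrow> (\<forall>i j. pp i j = pv aa i j \<and> qq i j = qv aa bb i j)"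
    using pv0 by (auto simp: grd_def)
  finally show ?thesis .
qed

lemma core_concrete: "P4 m n (Ss, Sd) (app_part m n (Ss, Sd)) (P, Q) \<longleftrightarrow> (P, Q) = Dp m n (Ss, Sd)"
  unfolding P4_Cs Dp_eq
  by (rule core_abs) (auto dest: dg_nz simp: grd_def split: if_splits)

end
lemma DMPGI_P4: "is_DMPGI m n B X = P4 m n B B X"
  by (simp add: is_DMPGI_def P4_def)
lemma GMPI_P4: "is_GMPI m n A Ae X = P4 m n A Ae X"
  by (simp add: is_GMPI_def P4_def)

lemma app_part_idem: "app_part m n (app_part m n S) = app_part m n S"
  by (auto simp: app_part_def intro!: eq_matI)

lemma app_part_carrier: "app_part m n S \<in> dcarrier m n"
  by (simp add: app_part_def dcarrier_def)

lemma Dp_carrier: "Dp m n S \<in> dcarrier n m"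
  by (simp add: Dp_def dcarrier_def)

lemma Dp_app: "Dp m n (app_part m n S) = Dp m n S"
proof -
  have a: "dg m n (fst (app_part m n S)) = dg m n (fst S)"
    by (auto simp: dg_def app_part_def)
  have b: "qv (dg m n (fst S)) (dg m n (snd (app_part m n S))) i j = qv (dg m n (fst S)) (dg m n (snd S)) i j" for i j
    by (auto simp: qv_def dg_def app_part_def)
  show ?thesis unfolding Dp_def a using b by auto
qed

lemma app_diag:
  assumes "\<forall>i<m. \<forall>j<n. i \<noteq> j \<longrightarrow> M $$ (i, j) = 0"
  shows "\<forall>i<m. \<forall>j<n. i \<noteq> j \<longrightarrow> fst (app_part m n (M, N)) $$ (i, j) = 0"
        "\<forall>i<m. \<forall>j<n. i \<noteq> j \<longrightarrow> snd (app_part m n (M, N)) $$ (i, j) = 0"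
  using assms by (auto simp: app_part_def)

lemma core_pair:
  assumes S: "S \<in> dcarrier m n"
    and dS: "\<forall>i<m. \<forall>j<n. i \<noteq> j \<longrightarrow> fst S $$ (i, j) = 0"
    and dD: "\<forall>i<m. \<forall>j<n. i \<noteq> j \<longrightarrow> snd S $$ (i, j) = 0"
    and Y: "Y \<in> dcarrier n m"
  shows "P4 m n S (app_part m n S) Y \<longleftrightarrow> Y = Dp m n S"
proof -
  obtain Ss Sd where s: "S = (Ss, Sd)" by fastforce
  obtain P Q where y: "Y = (P, Q)" by fastforce
  show ?thesis
    unfolding s y
    by (rule core_concrete) (use S Y dS dD s y in \<open>auto simp: dcarrier_def\<close>)
qed

theorem theorem5p2:
  fixes m n :: nat and A U S V :: dmat
  assumes "dsvd m n A U S V"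
  defines "Ae \<equiv> ess_part m n U S V"
  shows "(\<exists>X. is_DMPGI m n Ae X) \<and>
         (\<forall>X. is_GMPI m n A Ae X \<longleftrightarrow> is_DMPGI m n Ae X) \<and>
         ((\<forall>i<min m n. fst S $$ (i, i) = 0 \<longrightarrow> snd S $$ (i, i) = 0) \<longrightarrow>
            (\<exists>X. is_DMPGI m n A X) \<and> (\<forall>X. is_DMPGI m n A X \<longleftrightarrow> is_GMPI m n A Ae X)) \<and>
         (\<not> (\<forall>i<min m n. fst S $$ (i, i) = 0 \<longrightarrow> snd S $$ (i, i) = 0) \<longrightarrow>
            \<not> (\<exists>X. is_DMPGI m n A X))"
proof -
  have Ac: "A \<in> dcarrier m n" and U: "dorthogonal m U" and V: "dorthogonal n V"
    and Sc: "S \<in> dcarrier m n" and off: "\<forall>i<m. \<forall>j<n. i \<noteq> j \<longrightarrow> dentry S i j = (0, 0)"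
    and AUSV: "A = dmult (dmult U S) (dtrans V)"
    using assms(1) unfolding dsvd_def by auto
  have Uc: "U \<in> dcarrier m m" and Vc: "V \<in> dcarrier n n" using U V by (auto simp: dorthogonal_def)
  obtain Ss Sd where s: "S = (Ss, Sd)" by fastforce
  have dS: "\<forall>i<m. \<forall>j<n. i \<noteq> j \<longrightarrow> fst S $$ (i, j) = 0"
    and dD: "\<forall>i<m. \<forall>j<n. i \<noteq> j \<longrightarrow> snd S $$ (i, j) = 0"
    using off by (auto simp: dentry_def)
  define D where "D = app_part m n S"
  have Dc: "D \<in> dcarrier m n" unfolding D_def by (rule app_part_carrier)
  have AeD: "Ae = dmult (dmult U D) (dtrans V)" unfolding Ae_def ess_part_def D_def ..
  have dS': "\<forall>i<m. \<forall>j<n. i \<noteq> j \<longrightarrow> fst D $$ (i, j) = 0"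
    and dD': "\<forall>i<m. \<forall>j<n. i \<noteq> j \<longrightarrow> snd D $$ (i, j) = 0"
    unfolding D_def s using app_diag[of m n Ss Sd] dS dD s by auto
  define X0 where "X0 = dmult (dmult V (Dp m n S)) (dtrans U)"
  have X0c: "X0 \<in> dcarrier n m" unfolding X0_def using Vc Uc Dp_carrier by blast
  have Y0: "dmult (dmult (dtrans V) X0) U = Dp m n S"
  proof -
    have "dmult (dmult (dtrans V) X0) U = dmult (dtrans V) (dmult V (dmult (dmult (Dp m n S) (dtrans U)) U))"
      unfolding X0_def using Vc Uc Dp_carrier[of m n S]
      by (simp add: dmult_assoc[of _ n n _ n _ m] dmult_assoc[of _ n n _ m _ m] dmult_assoc[of _ n m _ m _ m]
          dtrans_carrier dmult_carrier)
    also have "\<dots> = Dp m n S"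
      using orth_cancel_l(1)[OF V] orth_cancel_r(1)[OF U Dp_carrier[of m n S]] Dp_carrier[of m n S] by simp
    finally show ?thesis .
  qed
  have G: "is_GMPI m n A Ae X \<longleftrightarrow> X = X0" for X
  proof (cases "X \<in> dcarrier n m")
    case True
    have Yc: "dmult (dmult (dtrans V) X) U \<in> dcarrier n m" using True Vc Uc by blast
    have "is_GMPI m n A Ae X \<longleftrightarrow> dmult (dmult (dtrans V) X) U = Dp m n S"
      unfolding GMPI_P4 AUSV AeD conj_P4[OF U V Sc Dc True]
      using core_pair[OF Sc dS dD Yc] unfolding D_def .
    also have "\<dots> \<longleftrightarrow> X = X0"
    proof
      assume h: "dmult (dmult (dtrans V) X) U = Dp m n S"
      have W: "dmult (dtrans V) X \<in> dcarrier n m" using True Vc by blast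
      have WU: "dmult (dmult (dtrans V) X) U \<in> dcarrier n m" using W Uc by blast
      have "dmult (dmult V (dmult (dmult (dtrans V) X) U)) (dtrans U)
          = dmult V (dmult (dmult (dmult (dtrans V) X) U) (dtrans U))"
        by (rule dmult_assoc[OF Vc WU dtrans_carrier[OF Uc]])
      also have "\<dots> = dmult V (dmult (dtrans V) X)" using orth_cancel_r(2)[OF U W] by simp
      also have "\<dots> = X" using orth_cancel_l(2)[OF V True] .
      finally have "X = dmult (dmult V (dmult (dmult (dtrans V) X) U)) (dtrans U)" by simp
      then show "X = X0" unfolding h X0_def .
    qed (use Y0 in simp)
    finally show ?thesis .
  next
    case False
    then show ?thesis using X0c by (auto simp: is_GMPI_def)
  qed
  have DM: "is_DMPGI m n Ae X \<longleftrightarrow> X = X0" for X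
  proof (cases "X \<in> dcarrier n m")
    case True
    have Yc: "dmult (dmult (dtrans V) X) U \<in> dcarrier n m" using True Vc Uc by blast
    have "is_DMPGI m n Ae X \<longleftrightarrow> dmult (dmult (dtrans V) X) U = Dp m n S"
      unfolding DMPGI_P4 AeD conj_P4[OF U V Dc Dc True]
      using core_pair[OF Dc dS' dD' Yc] unfolding D_def app_part_idem Dp_app .
    also have "\<dots> \<longleftrightarrow> X = X0"
    proof
      assume h: "dmult (dmult (dtrans V) X) U = Dp m n S"
      have W: "dmult (dtrans V) X \<in> dcarrier n m" using True Vc by blast
      have WU: "dmult (dmult (dtrans V) X) U \<in> dcarrier n m" using W Uc by blast
      have "dmult (dmult V (dmult (dmult (dtrans V) X) U)) (dtrans U)
          = dmult V (dmult (dmult (dmult (dtrans V) X) U) (dtrans U))"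
        by (rule dmult_assoc[OF Vc WU dtrans_carrier[OF Uc]])
      also have "\<dots> = dmult V (dmult (dtrans V) X)" using orth_cancel_r(2)[OF U W] by simp
      also have "\<dots> = X" using orth_cancel_l(2)[OF V True] .
      finally have "X = dmult (dmult V (dmult (dmult (dtrans V) X) U)) (dtrans U)" by simp
      then show "X = X0" unfolding h X0_def .
    qed (use Y0 in simp)
    finally show ?thesis .
  next
    case False
    then show ?thesis using X0c by (auto simp: is_DMPGI_def)
  qed
  have part3: "(\<exists>X. is_DMPGI m n A X) \<and> (\<forall>X. is_DMPGI m n A X \<longleftrightarrow> is_GMPI m n A Ae X)"
    if cond: "\<forall>i<min m n. fst S $$ (i, i) = 0 \<longrightarrow> snd S $$ (i, i) = 0"
  proof -
    have "D = S"
    proof -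
      have f: "fst D = Ss" using Sc s unfolding D_def app_part_def by (auto simp: dcarrier_def intro!: eq_matI)
      have g: "snd D = Sd"
      proof (rule eq_matI)
        fix i j assume ij: "i < dim_row Sd" "j < dim_col Sd"
        then have ij': "i < m" "j < n" using Sc s by (auto simp: dcarrier_def)
        show "snd D $$ (i, j) = Sd $$ (i, j)"
          using ij' cond dD s unfolding D_def app_part_def by (cases "i = j") auto
      qed (use Sc s in \<open>auto simp: D_def app_part_def dcarrier_def\<close>)
      show ?thesis using f g s by (simp add: prod_eq_iff)
    qed
    then have "Ae = A" using AeD AUSV by simp
    then show ?thesis using G DM by auto
  qed
  have part4: "\<not> (\<exists>X. is_DMPGI m n A X)"
    if ncond: "\<not> (\<forall>i<min m n. fst S $$ (i, i) = 0 \<longrightarrow> snd S $$ (i, i) = 0)"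
  proof
    assume "\<exists>X. is_DMPGI m n A X"
    then obtain X where X: "is_DMPGI m n A X" by blast
    have Xc: "X \<in> dcarrier n m" using X by (simp add: is_DMPGI_def)
    obtain k where k: "k < min m n" "Ss $$ (k, k) = 0" "Sd $$ (k, k) \<noteq> 0" using ncond s by auto
    define Y where "Y = dmult (dmult (dtrans V) X) U"
    have Yc: "Y \<in> dcarrier n m" unfolding Y_def using Xc Vc Uc by blast
    obtain P Q where y: "Y = (P, Q)" by fastforce
    have P: "P \<in> carrier_mat n m" and Q: "Q \<in> carrier_mat n m" using Yc y by (auto simp: dcarrier_def)
    have Ssc: "Ss \<in> carrier_mat m n" and Sdc: "Sd \<in> carrier_mat m n" using Sc s by (auto simp: dcarrier_def)
    have "P4 m n S S Y"
      using X unfolding DMPGI_P4 AUSV conj_P4[OF U V Sc Sc Xc] Y_def .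
    then have "snd (dmult (dmult S Y) S) = Sd" unfolding P4_def s by simp
    then have "(Ss * P * Sd + (Ss * Q + Sd * P) * Ss) $$ (k, k) = Sd $$ (k, k)"
      unfolding s y by (simp add: dmult_def)
    moreover have "dg m n Ss k = 0" using k by (simp add: dg_def)
    ultimately show False
      using E_SYS(2)[OF Ssc Sdc, of P Q k k] dS dD s P Q k by simp
  qed
  show ?thesis using G DM X0c part3 part4 by blast
qed

end
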